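(* Let $d\ge1$, let $G$ be an $\mathcal{R}_d$-independent graph and let $G'$ be obtained from $G$ by applying a $(d+1)$-dimensional $X$-replacement or a $(d+1)$-dimensional $V$-replacement. Then $G'$ is $\mathcal{R}_{d+1}$-independent.
   Context: For a graph $G=(V,E)$ and a generic $p:V\to\mathbb{R}^d$ (coordinates algebraically independent over $\mathbb{Q}$), the rigidity matrix has a row for each $uv\in E$ with $p(u)-p(v)$ in the $d$ columns of $u$, $p(v)-p(u)$ in those of $v$, zeros elsewhere; $\mathcal{R}_d$ is its row matroid, with rank $r_d$. A graph with edge set $F$ is $\mathcal{R}_d$-independent if $r_d(F)=|F|$. For an integer $D\ge1$: a $D$-dimensional $X$-replacement takes two non-adjacent (vertex-disjoint) edges $uv,xy$ of $G$, deletes them, and adds a new vertex $w$ of degree $D+2$ adjacent to $u,v,x,y$ (and $D-2$ further existing vertices). A $D$-dimensional $V$-replacement takes two adjacent edges $xy,yz$ of $G$, deletes them, and adds a new vertex $w$ of degree $D+2$ adjacent to $x,y,z$ (and $D-1$ further existing vertices). *)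

theory Defs
  imports Complex_Main "HOL-Library.Poly_Mapping"
begin

definition simple_graph :: "'a set \<Rightarrow> 'a set set \<Rightarrow> bool" where
  "simple_graph V E \<longleftrightarrow> finite V \<and> (\<forall>e\<in>E. \<exists>u v. e = {u, v} \<and> u \<noteq> v \<and> u \<in> V \<and> v \<in> V)"

text \<open>A realization p : V -> R^d is given as p v i (i < d). It is generic if the
coordinates p v i, (v,i) in V x {0..<d}, are algebraically independent over Q:
no nonzero rational polynomial in the variables (v,i) vanishes at p.
Polynomials are finitely supported maps from monomials (finitely supported
exponent maps) to rationals.\<close>
type_synonym 'a monomial = "('a \<times> nat) \<Rightarrow>\<^sub>0 nat"
type_synonym 'a rat_poly = "'a monomial \<Rightarrow>\<^sub>0 rat"

definition generic :: "nat \<Rightarrow> 'a set \<Rightarrow> ('a \<Rightarrow> nat \<Rightarrow> real) \<Rightarrow> bool" where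
  "generic d V p \<longleftrightarrow>
     (\<forall>c :: 'a rat_poly.
        c \<noteq> 0 \<and> (\<forall>m\<in>Poly_Mapping.keys c. Poly_Mapping.keys m \<subseteq> V \<times> {..<d}) \<longrightarrow>
        (\<Sum>m\<in>Poly_Mapping.keys c. of_rat (Poly_Mapping.lookup c m) * (\<Prod>x\<in>Poly_Mapping.keys m. p (fst x) (snd x) ^ Poly_Mapping.lookup m x)) \<noteq> 0)"

text \<open>Entry of the rigidity matrix in row e (an edge) and column (x,i):
p(x)_i - p(y)_i if e = {x,y}, and 0 if x is not an endpoint of e.\<close>
definition rigidity_entry :: "('a \<Rightarrow> nat \<Rightarrow> real) \<Rightarrow> 'a set \<Rightarrow> 'a \<Rightarrow> nat \<Rightarrow> real" where
  "rigidity_entry p e x i = (if x \<in> e then (\<Sum>y\<in>e - {x}. p x i - p y i) else 0)"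

text \<open>R_d-independence: the rows of the rigidity matrix (columns indexed by V x {0..<d})
at a generic realization are linearly independent, i.e. r_d(E) = |E|.\<close>
definition rd_independent :: "nat \<Rightarrow> 'a set \<Rightarrow> 'a set set \<Rightarrow> bool" where
  "rd_independent d V E \<longleftrightarrow>
     (\<forall>p. generic d V p \<longrightarrow>
        (\<forall>c :: 'a set \<Rightarrow> real.
           (\<forall>x\<in>V. \<forall>i<d. (\<Sum>e\<in>E. c e * rigidity_entry p e x i) = 0) \<longrightarrow> (\<forall>e\<in>E. c e = 0)))"

definition X_replacement :: "nat \<Rightarrow> 'a set \<Rightarrow> 'a set set \<Rightarrow> 'a set \<Rightarrow> 'a set set \<Rightarrow> bool" where
  "X_replacement D V E V' E' \<longleftrightarrow>
     (\<exists>u v x y w N. {u, v} \<in> E \<and> {x, y} \<in> E \<and> {u, v} \<inter> {x, y} = {} \<and>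
        w \<notin> V \<and> N \<subseteq> V \<and> {u, v, x, y} \<subseteq> N \<and> card N = D + 2 \<and>
        V' = insert w V \<and>
        E' = (E - {{u, v}, {x, y}}) \<union> {{w, z} | z. z \<in> N})"

definition V_replacement :: "nat \<Rightarrow> 'a set \<Rightarrow> 'a set set \<Rightarrow> 'a set \<Rightarrow> 'a set set \<Rightarrow> bool" where
  "V_replacement D V E V' E' \<longleftrightarrow>
     (\<exists>x y z w N. {x, y} \<in> E \<and> {y, z} \<in> E \<and> x \<noteq> z \<and>
        w \<notin> V \<and> N \<subseteq> V \<and> {x, y, z} \<subseteq> N \<and> card N = D + 2 \<and>
        V' = insert w V \<and>
        E' = (E - {{x, y}, {y, z}}) \<union> {{w, t} | t. t \<in> N})"

end

theory Submission
  imports Defs Jordan_Normal_Form.Determinant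
begin
definition mon :: "'a monomial \<Rightarrow> ('a \<Rightarrow> nat \<Rightarrow> real) \<Rightarrow> real" where
  "mon m r = (\<Prod>x\<in>Poly_Mapping.keys m. r (fst x) (snd x) ^ Poly_Mapping.lookup m x)"

definition peval :: "'a rat_poly \<Rightarrow> ('a \<Rightarrow> nat \<Rightarrow> real) \<Rightarrow> real" where
  "peval c r = (\<Sum>m\<in>Poly_Mapping.keys c. of_rat (Poly_Mapping.lookup c m) * mon m r)"

definition polyfun :: "('a \<times> nat) set \<Rightarrow> (('a \<Rightarrow> nat \<Rightarrow> real) \<Rightarrow> real) \<Rightarrow> bool" where
  "polyfun S f \<longleftrightarrow> (\<exists>c::'a rat_poly. (\<forall>m\<in>Poly_Mapping.keys c. Poly_Mapping.keys m \<subseteq> S) \<and> (\<forall>r. f r = peval c r))"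

lemma mon_superset:
  assumes "finite T" "Poly_Mapping.keys m \<subseteq> T"
  shows "mon m r = (\<Prod>x\<in>T. r (fst x) (snd x) ^ Poly_Mapping.lookup m x)"
  unfolding mon_def
  by (rule prod.mono_neutral_left) (use assms in \<open>auto simp: in_keys_iff\<close>)

lemma mon_add: "mon (m1 + m2) r = mon m1 r * mon m2 r"
proof -
  let ?T = "Poly_Mapping.keys m1 \<union> Poly_Mapping.keys m2"
  have f: "finite ?T" by simp
  have "mon (m1 + m2) r = (\<Prod>x\<in>?T. r (fst x) (snd x) ^ Poly_Mapping.lookup (m1+m2) x)"
    by (rule mon_superset[OF f]) (rule keys_add)
  also have "\<dots> = (\<Prod>x\<in>?T. r (fst x) (snd x) ^ Poly_Mapping.lookup m1 x * r (fst x) (snd x) ^ Poly_Mapping.lookup m2 x)"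
    by (simp add: lookup_add power_add)
  also have "\<dots> = mon m1 r * mon m2 r"
    by (simp add: prod.distrib mon_superset[OF f])
  finally show ?thesis .
qed

lemma peval_superset:
  assumes "finite T" "Poly_Mapping.keys c \<subseteq> T"
  shows "peval c r = (\<Sum>m\<in>T. of_rat (Poly_Mapping.lookup c m) * mon m r)"
  unfolding peval_def
  by (rule sum.mono_neutral_left) (use assms in \<open>auto simp: in_keys_iff\<close>)

lemma polyfun_term:
  assumes "Poly_Mapping.keys m \<subseteq> S"
  shows "polyfun S (\<lambda>r. of_rat k * mon m r)"
  unfolding polyfun_def
proof (intro exI[of _ "Poly_Mapping.single m k"] conjI allI)
  show "\<forall>m'\<in>Poly_Mapping.keys (Poly_Mapping.single m k). Poly_Mapping.keys m' \<subseteq> S"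
    using assms by auto
  fix r
  show "of_rat k * mon m r = peval (Poly_Mapping.single m k) r"
    by (subst peval_superset[of "{m}"]) auto
qed

lemma polyfun_zero: "polyfun S (\<lambda>r. 0)"
  unfolding polyfun_def by (intro exI[of _ 0]) (auto simp: peval_def)

lemma polyfun_add:
  assumes "polyfun S f" "polyfun S g"
  shows "polyfun S (\<lambda>r. f r + g r)"
proof -
  obtain c1 where c1: "\<forall>m\<in>Poly_Mapping.keys c1. Poly_Mapping.keys m \<subseteq> S" "\<forall>r. f r = peval c1 r"
    using assms(1) unfolding polyfun_def by blast
  obtain c2 where c2: "\<forall>m\<in>Poly_Mapping.keys c2. Poly_Mapping.keys m \<subseteq> S" "\<forall>r. g r = peval c2 r"
    using assms(2) unfolding polyfun_def by blast
  let ?T = "Poly_Mapping.keys c1 \<union> Poly_Mapping.keys c2"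
  have f: "finite ?T" by simp
  show ?thesis unfolding polyfun_def
  proof (intro exI[of _ "c1 + c2"] conjI allI)
    show "\<forall>m\<in>Poly_Mapping.keys (c1 + c2). Poly_Mapping.keys m \<subseteq> S"
      using c1 c2 keys_add[of c1 c2] by blast
    fix r
    have "peval (c1 + c2) r = (\<Sum>m\<in>?T. of_rat (Poly_Mapping.lookup (c1+c2) m) * mon m r)"
      by (rule peval_superset[OF f keys_add])
    also have "\<dots> = peval c1 r + peval c2 r"
      by (simp add: lookup_add of_rat_add distrib_right sum.distrib peval_superset[OF f])
    finally show "f r + g r = peval (c1 + c2) r" using c1 c2 by simp
  qed
qed

lemma polyfun_sum:
  assumes "finite A" "\<And>a. a \<in> A \<Longrightarrow> polyfun S (f a)"
  shows "polyfun S (\<lambda>r. \<Sum>a\<in>A. f a r)"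
  using assms
proof (induction A rule: finite_induct)
  case empty then show ?case by (simp add: polyfun_zero)
next
  case (insert x F)
  then show ?case using polyfun_add[of S "f x" "\<lambda>r. \<Sum>a\<in>F. f a r"] by simp
qed

lemma polyfun_mult:
  assumes "polyfun S f" "polyfun S g"
  shows "polyfun S (\<lambda>r. f r * g r)"
proof -
  obtain c1 where c1: "\<forall>m\<in>Poly_Mapping.keys c1. Poly_Mapping.keys m \<subseteq> S" "\<forall>r. f r = peval c1 r"
    using assms(1) unfolding polyfun_def by blast
  obtain c2 where c2: "\<forall>m\<in>Poly_Mapping.keys c2. Poly_Mapping.keys m \<subseteq> S" "\<forall>r. g r = peval c2 r"
    using assms(2) unfolding polyfun_def by blast
  have eq: "f r * g r = (\<Sum>m1\<in>Poly_Mapping.keys c1. \<Sum>m2\<in>Poly_Mapping.keys c2.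
      of_rat (Poly_Mapping.lookup c1 m1 * Poly_Mapping.lookup c2 m2) * mon (m1 + m2) r)" for r
    using c1 c2 by (simp add: peval_def sum_product mon_add of_rat_mult mult_ac)
  have "polyfun S (\<lambda>r. \<Sum>m1\<in>Poly_Mapping.keys c1. \<Sum>m2\<in>Poly_Mapping.keys c2.
      of_rat (Poly_Mapping.lookup c1 m1 * Poly_Mapping.lookup c2 m2) * mon (m1 + m2) r)"
  proof (intro polyfun_sum polyfun_term finite_keys)
    fix m1 m2 assume "m1 \<in> Poly_Mapping.keys c1" "m2 \<in> Poly_Mapping.keys c2"
    then show "Poly_Mapping.keys (m1 + m2) \<subseteq> S" using c1 c2 keys_add[of m1 m2] by blast
  qed
  then show ?thesis using eq by simp
qed

lemma polyfun_const: "polyfun S (\<lambda>r. of_rat k)"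
  using polyfun_term[of 0 S k] by (simp add: mon_def)

lemma polyfun_var: "s \<in> S \<Longrightarrow> polyfun S (\<lambda>r. r (fst s) (snd s))"
  using polyfun_term[of "Poly_Mapping.single s 1" S 1] by (simp add: mon_def)

lemma polyfun_prod:
  assumes "finite A" "\<And>a. a \<in> A \<Longrightarrow> polyfun S (f a)"
  shows "polyfun S (\<lambda>r. \<Prod>a\<in>A. f a r)"
  using assms
proof (induction A rule: finite_induct)
  case empty then show ?case using polyfun_const[of S 1] by simp
next
  case (insert x F)
  then show ?case using polyfun_mult[of S "f x" "\<lambda>r. \<Prod>a\<in>F. f a r"] by simp
qed

lemma polyfun_diff:
  assumes "polyfun S f" "polyfun S g"
  shows "polyfun S (\<lambda>r. f r - g r)"
  using polyfun_add[OF assms(1) polyfun_mult[OF polyfun_const[of S "-1"] assms(2)]] by simp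

lemma polyfun_cong: "polyfun S f \<Longrightarrow> (\<And>r. f r = g r) \<Longrightarrow> polyfun S g"
  by (metis ext)

lemma generic_polyfun:
  assumes "generic D V q" "polyfun (V \<times> {..<D}) f" "f q = 0"
  shows "f r = 0"
proof -
  obtain c where c: "\<forall>m\<in>Poly_Mapping.keys c. Poly_Mapping.keys m \<subseteq> V \<times> {..<D}" "\<forall>r. f r = peval c r"
    using assms(2) unfolding polyfun_def by blast
  have "c = 0"
  proof (rule ccontr)
    assume "c \<noteq> 0"
    then have "peval c q \<noteq> 0" using assms(1) c(1) unfolding generic_def peval_def mon_def by blast
    then show False using c(2) assms(3) by simp
  qed
  then show ?thesis using c(2) by (simp add: peval_def)
qed

definition indep_at :: "nat \<Rightarrow> 'a set \<Rightarrow> 'a set set \<Rightarrow> ('a \<Rightarrow> nat \<Rightarrow> real) \<Rightarrow> bool" where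
  "indep_at D V E r \<longleftrightarrow> (\<forall>c :: 'a set \<Rightarrow> real.
     (\<forall>x\<in>V. \<forall>i<D. (\<Sum>e\<in>E. c e * rigidity_entry r e x i) = 0) \<longrightarrow> (\<forall>e\<in>E. c e = 0))"

lemma rd_independent_alt: "rd_independent D V E \<longleftrightarrow> (\<forall>p. generic D V p \<longrightarrow> indep_at D V E p)"
  unfolding rd_independent_def indep_at_def by simp

lemma polyfun_entry:
  assumes "finite e" "e \<subseteq> V" "x \<in> V" "i < D"
  shows "polyfun (V \<times> {..<D}) (\<lambda>r. rigidity_entry r e x i)"
proof (cases "x \<in> e")
  case True
  have "polyfun (V \<times> {..<D}) (\<lambda>r. \<Sum>y\<in>e - {x}. r x i - r y i)"
  proof (intro polyfun_sum polyfun_diff)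
    fix y assume "y \<in> e - {x}"
    then show "polyfun (V \<times> {..<D}) (\<lambda>r. r x i)" "polyfun (V \<times> {..<D}) (\<lambda>r. r y i)"
      using polyfun_var[of "(x,i)" "V \<times> {..<D}"] polyfun_var[of "(y,i)" "V \<times> {..<D}"] assms by auto
  qed (use assms in auto)
  then show ?thesis using True by (simp add: rigidity_entry_def)
next
  case False
  then show ?thesis using polyfun_zero by (simp add: rigidity_entry_def)
qed

definition gram :: "nat \<Rightarrow> 'a set \<Rightarrow> ('a \<Rightarrow> nat \<Rightarrow> real) \<Rightarrow> 'a set \<Rightarrow> 'a set \<Rightarrow> real" where
  "gram D V r e f = (\<Sum>s\<in>V \<times> {..<D}. rigidity_entry r e (fst s) (snd s) * rigidity_entry r f (fst s) (snd s))"

lemma polyfun_gram: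
  assumes "finite V" "finite e" "e \<subseteq> V" "finite f" "f \<subseteq> V"
  shows "polyfun (V \<times> {..<D}) (\<lambda>r. gram D V r e f)"
  unfolding gram_def
  by (intro polyfun_sum polyfun_mult polyfun_entry) (use assms in auto)

definition gmat :: "nat \<Rightarrow> 'a set \<Rightarrow> nat \<Rightarrow> (nat \<Rightarrow> 'a set) \<Rightarrow> ('a \<Rightarrow> nat \<Rightarrow> real) \<Rightarrow> real mat" where
  "gmat D V n g r = mat n n (\<lambda>(i,j). gram D V r (g i) (g j))"

lemma polyfun_det:
  assumes "finite V" "\<And>j. j < n \<Longrightarrow> finite (g j) \<and> g j \<subseteq> V"
  shows "polyfun (V \<times> {..<D}) (\<lambda>r. det (gmat D V n g r))"
proof -
  have c: "gmat D V n g r \<in> carrier_mat n n" for r by (simp add: gmat_def)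
  have "polyfun (V \<times> {..<D}) (\<lambda>r. \<Sum>p\<in>{p. p permutes {0..<n}}. signof p * (\<Prod>i=0..<n. gmat D V n g r $$ (i, p i)))"
  proof (intro polyfun_sum polyfun_mult polyfun_prod)
    show "finite {p. p permutes {0..<n}}" by (simp add: finite_permutations)
    fix p assume p: "p \<in> {p. p permutes {0..<n}}"
    show "polyfun (V \<times> {..<D}) (\<lambda>r. signof p)"
      using polyfun_const[of _ "of_int (sign p)"] by simp
    fix i assume i: "i \<in> {0..<n}"
    then have "p i < n" using p by (auto simp: permutes_in_image)
    then have eq: "gmat D V n g r $$ (i, p i) = gram D V r (g i) (g (p i))" for r
      using i by (simp add: gmat_def)
    show "polyfun (V \<times> {..<D}) (\<lambda>r. gmat D V n g r $$ (i, p i))"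
      unfolding eq using assms i \<open>p i < n\<close> by (intro polyfun_gram) auto
  qed (simp_all add: gmat_def)
  then show ?thesis by (simp add: det_def'[OF c])
qed

lemma dep_det_zero:
  assumes fV: "finite V" and g: "bij_betw g {0..<n} E" and nd: "\<not> indep_at D V E r"
  shows "det (gmat D V n g r) = 0"
proof -
  obtain c e0 where c: "\<forall>x\<in>V. \<forall>i<D. (\<Sum>e\<in>E. c e * rigidity_entry r e x i) = 0"
    and e0: "e0 \<in> E" "c e0 \<noteq> 0"
    using nd unfolding indep_at_def by blast
  let ?v = "vec n (\<lambda>j. c (g j))"
  have cs: "(\<Sum>f\<in>E. c f * rigidity_entry r f (fst s) (snd s)) = 0" if "s \<in> V \<times> {..<D}" for s
    using c that by auto
  have "gmat D V n g r *\<^sub>v ?v = 0\<^sub>v n"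
  proof (rule eq_vecI)
    fix i assume i: "i < dim_vec (0\<^sub>v n :: real vec)"
    then have i': "i < n" by simp
    have "(gmat D V n g r *\<^sub>v ?v) $ i = (\<Sum>j\<in>{0..<n}. gram D V r (g i) (g j) * c (g j))"
      using i' by (simp add: gmat_def scalar_prod_def)
    also have "\<dots> = (\<Sum>f\<in>E. gram D V r (g i) f * c f)"
      by (rule sum.reindex_bij_betw[OF g, where g = "\<lambda>f. gram D V r (g i) f * c f"])
    also have "\<dots> = (\<Sum>s\<in>V \<times> {..<D}. rigidity_entry r (g i) (fst s) (snd s) *
                        (\<Sum>f\<in>E. c f * rigidity_entry r f (fst s) (snd s)))"
      unfolding gram_def sum_distrib_left sum_distrib_right
      by (subst sum.swap) (simp add: mult_ac)
    also have "\<dots> = 0" using cs by simp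
    finally show "(gmat D V n g r *\<^sub>v ?v) $ i = 0\<^sub>v n $ i" using i' by simp
  qed (simp add: gmat_def)
  moreover have "?v \<noteq> 0\<^sub>v n"
  proof
    assume "?v = 0\<^sub>v n"
    obtain j where j: "j \<in> {0..<n}" "g j = e0" using g e0 unfolding bij_betw_def by auto
    then have "?v $ j = c e0" by simp
    then show False using \<open>?v = 0\<^sub>v n\<close> j e0 by simp
  qed
  moreover have "?v \<in> carrier_vec n" by simp
  moreover have "gmat D V n g r \<in> carrier_mat n n" by (simp add: gmat_def)
  ultimately show ?thesis using det_0_iff_vec_prod_zero by blast
qed

lemma det_zero_dep:
  assumes fV: "finite V" and g: "bij_betw g {0..<n} E" and dz: "det (gmat D V n g r) = 0"
  shows "\<not> indep_at D V E r"
proof -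
  have cm: "gmat D V n g r \<in> carrier_mat n n" by (simp add: gmat_def)
  obtain v where v: "v \<in> carrier_vec n" "v \<noteq> 0\<^sub>v n" "gmat D V n g r *\<^sub>v v = 0\<^sub>v n"
    using dz det_0_iff_vec_prod_zero[OF cm] by blast
  obtain j0 where j0: "j0 < n" "v $ j0 \<noteq> 0" using v(1,2) by (auto simp: vec_eq_iff)
  define h where "h = the_inv_into {0..<n} g"
  have hg: "h (g j) = j" if "j < n" for j
    using g that unfolding h_def bij_betw_def by (auto intro: the_inv_into_f_f)
  define c where "c f = v $ h f" for f
  define w where "w s = (\<Sum>j\<in>{0..<n}. v $ j * rigidity_entry r (g j) (fst s) (snd s))" for s
  have Mv: "(\<Sum>j\<in>{0..<n}. gram D V r (g i) (g j) * v $ j) = 0" if "i < n" for i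
  proof -
    have "(gmat D V n g r *\<^sub>v v) $ i = 0" using v(3) that by simp
    then show ?thesis using that v(1) by (simp add: gmat_def scalar_prod_def)
  qed
  have "0 = (\<Sum>i\<in>{0..<n}. v $ i * (\<Sum>j\<in>{0..<n}. gram D V r (g i) (g j) * v $ j))"
    using Mv by simp
  also have "\<dots> = (\<Sum>i\<in>{0..<n}. \<Sum>j\<in>{0..<n}. \<Sum>s\<in>V \<times> {..<D}.
      v $ i * rigidity_entry r (g i) (fst s) (snd s) * (v $ j * rigidity_entry r (g j) (fst s) (snd s)))"
    unfolding gram_def sum_distrib_left sum_distrib_right by (simp add: mult_ac)
  also have "\<dots> = (\<Sum>i\<in>{0..<n}. \<Sum>s\<in>V \<times> {..<D}. \<Sum>j\<in>{0..<n}.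
      v $ i * rigidity_entry r (g i) (fst s) (snd s) * (v $ j * rigidity_entry r (g j) (fst s) (snd s)))"
    by (rule sum.cong[OF refl], rule sum.swap)
  also have "\<dots> = (\<Sum>s\<in>V \<times> {..<D}. \<Sum>i\<in>{0..<n}. \<Sum>j\<in>{0..<n}.
      v $ i * rigidity_entry r (g i) (fst s) (snd s) * (v $ j * rigidity_entry r (g j) (fst s) (snd s)))"
    by (rule sum.swap)
  also have "\<dots> = (\<Sum>s\<in>V \<times> {..<D}. w s * w s)"
    unfolding w_def sum_product by simp
  finally have "(\<Sum>s\<in>V \<times> {..<D}. w s * w s) = 0" by simp
  then have w0: "\<forall>s\<in>V \<times> {..<D}. w s * w s = 0"
    using fV by (subst sum_nonneg_eq_0_iff[symmetric]) auto
  have "\<forall>x\<in>V. \<forall>i<D. (\<Sum>e\<in>E. c e * rigidity_entry r e x i) = 0"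
  proof (intro ballI allI impI)
    fix x i assume xi: "x \<in> V" "i < D"
    have "(\<Sum>e\<in>E. c e * rigidity_entry r e x i) = (\<Sum>j\<in>{0..<n}. c (g j) * rigidity_entry r (g j) x i)"
      by (rule sum.reindex_bij_betw[OF g, symmetric])
    also have "\<dots> = w (x, i)" unfolding w_def c_def by (intro sum.cong) (auto simp: hg)
    also have "\<dots> = 0" using w0 xi by auto
    finally show "(\<Sum>e\<in>E. c e * rigidity_entry r e x i) = 0" .
  qed
  moreover have "g j0 \<in> E" "c (g j0) \<noteq> 0"
    using g j0 hg[OF j0(1)] unfolding c_def bij_betw_def by auto
  ultimately show ?thesis unfolding indep_at_def by blast
qed

lemma specialize:
  assumes fV: "finite V" and E: "\<forall>e\<in>E. finite e \<and> e \<subseteq> V"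
    and gen: "generic D V q" and ind0: "indep_at D V E q0"
  shows "indep_at D V E q"
proof (rule ccontr)
  assume nd: "\<not> indep_at D V E q"
  have fE: "finite E" using E fV by (meson Pow_iff finite_Pow_iff rev_finite_subset subsetI)
  obtain g where g: "bij_betw g {0..<card E} E" using ex_bij_betw_nat_finite[OF fE] by blast
  have gE: "finite (g j) \<and> g j \<subseteq> V" if "j < card E" for j
  proof -
    have "g j \<in> E" using g that by (auto simp: bij_betw_def)
    then show ?thesis using E by blast
  qed
  have pf: "polyfun (V \<times> {..<D}) (\<lambda>r. det (gmat D V (card E) g r))"
    by (rule polyfun_det[OF fV gE])
  have "det (gmat D V (card E) g q) = 0" by (rule dep_det_zero[OF fV g nd])
  then have "det (gmat D V (card E) g q0) = 0" by (rule generic_polyfun[OF gen pf])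
  then have "\<not> indep_at D V E q0" by (rule det_zero_dep[OF fV g])
  then show False using ind0 by simp
qed

lemma cone_indep:
  assumes fV: "finite V" and w: "w \<notin> V"
    and Eok: "\<forall>e\<in>E. \<exists>a b. e = {a, b} \<and> a \<noteq> b \<and> a \<in> V \<and> b \<in> V"
    and ind: "rd_independent d V E"
    and sub: "E' \<subseteq> E \<union> {{w, z} | z. z \<in> V}"
  shows "rd_independent (Suc d) (insert w V) E'"
  unfolding rd_independent_alt
proof (intro allI impI)
  fix q assume gen: "generic (Suc d) (insert w V) q"
  have gend: "generic d V q"
    unfolding generic_def
  proof (intro allI impI)
    fix c :: "'a rat_poly"
    assume a: "c \<noteq> 0 \<and> (\<forall>m\<in>Poly_Mapping.keys c. Poly_Mapping.keys m \<subseteq> V \<times> {..<d})"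
    have ss: "V \<times> {..<d} \<subseteq> insert w V \<times> {..<Suc d}" by auto
    have "c \<noteq> 0 \<and> (\<forall>m\<in>Poly_Mapping.keys c. Poly_Mapping.keys m \<subseteq> insert w V \<times> {..<Suc d})"
      using a ss by (meson subset_trans)
    then show "(\<Sum>m\<in>Poly_Mapping.keys c. of_rat (Poly_Mapping.lookup c m) * (\<Prod>x\<in>Poly_Mapping.keys m. q (fst x) (snd x) ^ Poly_Mapping.lookup m x)) \<noteq> 0"
      using gen unfolding generic_def by blast
  qed
  have indq: "indep_at d V E q" using ind gend rd_independent_alt by blast
  define q0 where "q0 v i = (if v = w then (if i = d then 1 else 0) else (if i = d then 0 else q v i))" for v i
  have Wc: "\<exists>z. e = {w, z} \<and> z \<in> V" if "e \<in> E'" "e \<notin> E" for e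
    using sub that by blast
  have E'ok: "\<forall>e\<in>E'. finite e \<and> e \<subseteq> insert w V"
  proof
    fix e assume e: "e \<in> E'"
    show "finite e \<and> e \<subseteq> insert w V"
    proof (cases "e \<in> E")
      case True
      then obtain a b where "e = {a, b}" "a \<in> V" "b \<in> V" using Eok by blast
      then show ?thesis by auto
    next
      case False
      then obtain z where "e = {w, z}" "z \<in> V" using Wc e by blast
      then show ?thesis by auto
    qed
  qed
  have fE': "finite E'"
  proof (rule finite_subset)
    show "E' \<subseteq> Pow (insert w V)" using E'ok by auto
  qed (use fV in simp)
  have "indep_at (Suc d) (insert w V) E' q0"
    unfolding indep_at_def
  proof (intro allI impI)
    fix c :: "'a set \<Rightarrow> real"
    assume H: "\<forall>x\<in>insert w V. \<forall>i<Suc d. (\<Sum>e\<in>E'. c e * rigidity_entry q0 e x i) = 0"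
    have entry_d: "rigidity_entry q0 e z d = (if e = {w, z} then -1 else 0)" if ee: "e \<in> E'" and zz: "z \<in> V" for e z
    proof (cases "e \<in> E")
      case True
      then obtain a b where ab: "e = {a, b}" "a \<noteq> b" "a \<in> V" "b \<in> V" using Eok by blast
      have "w \<notin> e" using ab(1,3,4) w by blast
      then have "e \<noteq> {w, z}" by (metis insertI1)
      moreover have "rigidity_entry q0 e z d = 0"
      proof -
        have qd: "q0 y d = 0" if "y \<in> V" for y
        proof -
          have "y \<noteq> w" using that w by blast
          then show ?thesis by (simp add: q0_def)
        qed
        have "\<forall>y\<in>e - {z}. q0 z d - q0 y d = 0" using ab qd zz by auto
        then show ?thesis unfolding rigidity_entry_def by simp
      qed
      ultimately show ?thesis by simp
    next
      case False
      then obtain z' where z': "e = {w, z'}" "z' \<in> V" using Wc ee by blast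
      show ?thesis
      proof (cases "z' = z")
        case True
        have "{w, z} - {z} = {w}" using w zz by auto
        then show ?thesis using z' True w zz
          by (auto simp: rigidity_entry_def q0_def)
      next
        case False
        then have "z \<notin> e" using z' w zz by auto
        moreover have "e \<noteq> {w, z}" using z' False w zz by (auto simp: doubleton_eq_iff)
        ultimately show ?thesis by (simp add: rigidity_entry_def)
      qed
    qed
    have cw: "c e = 0" if ee: "e \<in> E'" and ne: "e \<notin> E" for e
    proof -
      obtain z where z: "e = {w, z}" "z \<in> V" using Wc ee ne by blast
      have "0 = (\<Sum>e'\<in>E'. c e' * rigidity_entry q0 e' z d)" using H z(2) by auto
      also have "\<dots> = (\<Sum>e'\<in>E'. if e' = e then - c e' else 0)"
        by (rule sum.cong[OF refl]) (simp add: entry_d z(2) z(1)[symmetric])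
      also have "\<dots> = - c e" using fE' ee by (simp add: sum.delta)
      finally show ?thesis by simp
    qed
    define c' where "c' e = (if e \<in> E' then c e else 0)" for e
    have fE: "finite E"
      proof (rule finite_subset)
      show "E \<subseteq> Pow V"
      proof
        fix e assume "e \<in> E"
        then obtain a b where "e = {a, b}" "a \<in> V" "b \<in> V" using Eok by blast
        then show "e \<in> Pow V" by auto
      qed
    qed (use fV in simp)
    have "\<forall>x\<in>V. \<forall>i<d. (\<Sum>e\<in>E. c' e * rigidity_entry q e x i) = 0"
    proof (intro ballI allI impI)
      fix x i assume xi: "x \<in> V" "i < d"
      have ent: "rigidity_entry q0 e x i = rigidity_entry q e x i" if eE: "e \<in> E" for e
      proof -
        obtain a b where ab: "e = {a, b}" "a \<in> V" "b \<in> V" using Eok eE by blast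
        have "\<forall>y\<in>e. q0 y i = q y i" using ab w xi by (auto simp: q0_def)
        moreover have "q0 x i = q x i" using xi w by (auto simp: q0_def)
        ultimately show ?thesis unfolding rigidity_entry_def by auto
      qed
      have "(\<Sum>e\<in>E. c' e * rigidity_entry q e x i) = (\<Sum>e\<in>E. if e \<in> E' then c e * rigidity_entry q e x i else 0)"
        by (rule sum.cong) (auto simp: c'_def)
      also have "\<dots> = (\<Sum>e\<in>E \<inter> E'. c e * rigidity_entry q e x i)"
        by (rule sum.inter_restrict[OF fE, symmetric])
      also have "\<dots> = (\<Sum>e\<in>E' \<inter> E. c e * rigidity_entry q0 e x i)"
        by (rule sum.cong) (auto simp: ent)
      also have "\<dots> = (\<Sum>e\<in>E'. c e * rigidity_entry q0 e x i)"
        by (rule sum.mono_neutral_left) (use fE' cw in auto)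
      also have "\<dots> = 0" using H xi by auto
      finally show "(\<Sum>e\<in>E. c' e * rigidity_entry q e x i) = 0" .
    qed
    then have "\<forall>e\<in>E. c' e = 0" using indq unfolding indep_at_def by blast
    then show "\<forall>e\<in>E'. c e = 0" using cw unfolding c'_def by metis
  qed
  then show "indep_at (Suc d) (insert w V) E' q"
    using specialize[OF _ E'ok gen] fV by simp
qed

theorem corollary4p18:
  fixes d :: nat and V V' :: "'a set" and E E' :: "'a set set"
  assumes "d \<ge> 1"
    and "simple_graph V E"
    and "rd_independent d V E"
    and "X_replacement (d + 1) V E V' E' \<or> V_replacement (d + 1) V E V' E'"
  shows "rd_independent (d + 1) V' E'"
proof -
  have fV: "finite V" and Eok: "\<forall>e\<in>E. \<exists>a b. e = {a, b} \<and> a \<noteq> b \<and> a \<in> V \<and> b \<in> V"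
    using assms(2) unfolding simple_graph_def by blast+
  obtain w N where wN: "w \<notin> V" "N \<subseteq> V" "V' = insert w V" "E' \<subseteq> E \<union> {{w, z} | z. z \<in> N}"
  proof (cases "X_replacement (d + 1) V E V' E'")
    case True
    then obtain u v x y w N where h: "w \<notin> V" "N \<subseteq> V" "V' = insert w V"
        "E' = (E - {{u, v}, {x, y}}) \<union> {{w, z} | z. z \<in> N}"
      unfolding X_replacement_def by (elim exE conjE) (rule that; assumption)
    show ?thesis by (rule that[OF h(1-3)]) (use h(4) in blast)
  next
    case False
    then have "V_replacement (d + 1) V E V' E'" using assms(4) by blast
    then obtain x y z w N where h: "w \<notin> V" "N \<subseteq> V" "V' = insert w V"
        "E' = (E - {{x, y}, {y, z}}) \<union> {{w, t} | t. t \<in> N}"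
      unfolding V_replacement_def by (elim exE conjE) (rule that; assumption)
    show ?thesis by (rule that[OF h(1-3)]) (use h(4) in blast)
  qed
  have sub: "E' \<subseteq> E \<union> {{w, z} | z. z \<in> V}" using wN by blast
  show ?thesis using cone_indep[OF fV wN(1) Eok assms(3) sub] wN(3) by simp
qed

end
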